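(* Let $p\ge 2$ and $\varphi\in\mathbb{C}^{p-1}\setminus\Omega$. Then $\dim Z^2_{0}(F_\varphi,F_\varphi)=4p^2-8p+5$.
   Context: Let $p\ge 2$ and $\varphi=(\varphi_1,\dots,\varphi_{p-1})\in\mathbb{C}^{p-1}$. $F_\varphi$ denotes the $2p$-dimensional complex Lie algebra with basis $X_1,\dots,X_{2p}$ whose nonzero brackets (up to antisymmetry) are $[X_1,X_2]=X_1$, $[X_2,X_{2k+1}]=\varphi_kX_{2k+1}$, $[X_2,X_{2k+2}]=-(1+\varphi_k)X_{2k+2}$, $[X_{2k+1},X_{2k+2}]=X_1$ for $1\le k\le p-1$. It is graded by $(F_\varphi)_0=\mathbb{C}X_2$, $(F_\varphi)_1=\operatorname{span}\{X_3,\dots,X_{2p}\}$, $(F_\varphi)_2=\mathbb{C}X_1$. A $2$-cochain $\psi$ is homogeneous of degree $k$ if $\psi((F_\varphi)_i,(F_\varphi)_j)\subset(F_\varphi)_{i+j+k}$; $Z^2_k(F_\varphi,F_\varphi)$ denotes the space of homogeneous degree-$k$ $2$-cocycles of the Chevalley–Eilenberg complex with adjoint coefficients. $\Omega=\Omega_1\cup\Omega_2\subset\mathbb{C}^{p-1}$, where $\Omega_1$ is the union of the hyperplanes $\{1+\varphi_i+\varphi_j=0\}$, $\{2+\varphi_i+\varphi_j=0\}$ ($1\le i,j\le p-1$), $\{\varphi_i-\varphi_j=0\}$ ($i\ne j$), $\{\varphi_i=0\}$, $\{\varphi_i+1=0\}$, $\{2\varphi_i+1=0\}$, and $\Omega_2$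 is the union of $\{1+\varphi_i-\varphi_j=0\}$, $\{\varphi_i+\varphi_j=0\}$, $\{2+\varphi_i=0\}$, $\{1-\varphi_i=0\}$, $\{1+2\varphi_i-\varphi_j=0\}$, $\{1+2\varphi_i+\varphi_j=0\}$, $\{2\varphi_i-\varphi_j=0\}$, $\{2+2\varphi_i+\varphi_j=0\}$ ($1\le i,j\le p-1$). *)

theory Defs
  imports Complex_Main "HOL-Library.Function_Algebras"
begin

text \<open>Basis X_1,...,X_{2p} indexed by the naturals 1..2p.  phi is a function
  nat => complex whose values at 1..p-1 are the components phi_1..phi_{p-1}.\<close>

text \<open>Structure constants: Fbr phi i j k = coefficient of X_k in [X_i, X_j] in F_phi.\<close>
definition Fbr :: "(nat \<Rightarrow> complex) \<Rightarrow> nat \<Rightarrow> nat \<Rightarrow> nat \<Rightarrow> complex" where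
  "Fbr phi i j k =
    (if i = 1 \<and> j = 2 \<and> k = 1 then 1
     else if i = 2 \<and> j = 1 \<and> k = 1 then -1
     else if i = 2 \<and> j \<ge> 3 \<and> odd j \<and> k = j then phi ((j - 1) div 2)
     else if j = 2 \<and> i \<ge> 3 \<and> odd i \<and> k = i then - phi ((i - 1) div 2)
     else if i = 2 \<and> j \<ge> 4 \<and> even j \<and> k = j then - (1 + phi ((j - 2) div 2))
     else if j = 2 \<and> i \<ge> 4 \<and> even i \<and> k = i then 1 + phi ((i - 2) div 2)
     else if i \<ge> 3 \<and> odd i \<and> j = i + 1 \<and> k = 1 then 1
     else if j \<ge> 3 \<and> odd j \<and> i = j + 1 \<and> k = 1 then -1
     else 0)"

definition Fdeg :: "nat \<Rightarrow> int" where
  "Fdeg i = (if i = 1 then 2 else if i = 2 then 0 else 1)"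

text \<open>A 2-cochain psi in C^2(F_phi,F_phi) is represented by its coefficient tensor:
  c i j k = coefficient of X_k in psi(X_i, X_j); zero outside the index range 1..2p,
  and antisymmetric in (i,j).\<close>
definition cochain2 :: "nat \<Rightarrow> (nat \<Rightarrow> nat \<Rightarrow> nat \<Rightarrow> complex) \<Rightarrow> bool" where
  "cochain2 p c \<longleftrightarrow>
     (\<forall>i j k. c i j k \<noteq> 0 \<longrightarrow> i \<in> {1..2*p} \<and> j \<in> {1..2*p} \<and> k \<in> {1..2*p}) \<and>
     (\<forall>i j k. c i j k = - c j i k)"

text \<open>Homogeneous of degree d: psi((F)_a,(F)_b) \<subseteq> (F)_{a+b+d}
  (where (F)_m = 0 for m outside {0,1,2}).\<close>
definition homogeneous2 :: "int \<Rightarrow> (nat \<Rightarrow> nat \<Rightarrow> nat \<Rightarrow> complex) \<Rightarrow> bool" where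
  "homogeneous2 d c \<longleftrightarrow> (\<forall>i j k. c i j k \<noteq> 0 \<longrightarrow> Fdeg k = Fdeg i + Fdeg j + d)"

text \<open>Chevalley-Eilenberg differential with adjoint coefficients, on basis vectors:
  d psi(x,y,z) = [x,psi(y,z)] - [y,psi(x,z)] + [z,psi(x,y)]
                 - psi([x,y],z) + psi([x,z],y) - psi([y,z],x);
  here the coefficient of X_m in d psi(X_a,X_b,X_e).\<close>
definition dCE2 :: "nat \<Rightarrow> (nat \<Rightarrow> complex) \<Rightarrow> (nat \<Rightarrow> nat \<Rightarrow> nat \<Rightarrow> complex)
                    \<Rightarrow> nat \<Rightarrow> nat \<Rightarrow> nat \<Rightarrow> nat \<Rightarrow> complex" where
  "dCE2 p phi c a b e m =
     (\<Sum>l\<in>{1..2*p}.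
         Fbr phi a l m * c b e l - Fbr phi b l m * c a e l + Fbr phi e l m * c a b l
       - Fbr phi a b l * c l e m + Fbr phi a e l * c l b m - Fbr phi b e l * c l a m)"

definition cocycle2 :: "nat \<Rightarrow> (nat \<Rightarrow> complex) \<Rightarrow> (nat \<Rightarrow> nat \<Rightarrow> nat \<Rightarrow> complex) \<Rightarrow> bool" where
  "cocycle2 p phi c \<longleftrightarrow> cochain2 p c \<and>
     (\<forall>a\<in>{1..2*p}. \<forall>b\<in>{1..2*p}. \<forall>e\<in>{1..2*p}. \<forall>m\<in>{1..2*p}. dCE2 p phi c a b e m = 0)"

definition Z2 :: "nat \<Rightarrow> (nat \<Rightarrow> complex) \<Rightarrow> int \<Rightarrow> (nat \<Rightarrow> nat \<Rightarrow> nat \<Rightarrow> complex) set" where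
  "Z2 p phi d = {c. cocycle2 p phi c \<and> homogeneous2 d c}"

definition tscale :: "complex \<Rightarrow> (nat \<Rightarrow> nat \<Rightarrow> nat \<Rightarrow> complex) \<Rightarrow> (nat \<Rightarrow> nat \<Rightarrow> nat \<Rightarrow> complex)" where
  "tscale a c = (\<lambda>i j k. a * c i j k)"

abbreviation cdim :: "(nat \<Rightarrow> nat \<Rightarrow> nat \<Rightarrow> complex) set \<Rightarrow> nat" where
  "cdim \<equiv> vector_space.dim tscale"

definition Omega1 :: "nat \<Rightarrow> (nat \<Rightarrow> complex) \<Rightarrow> bool" where
  "Omega1 p phi \<longleftrightarrow>
    (\<exists>i\<in>{1..p-1}. \<exists>j\<in>{1..p-1}. 1 + phi i + phi j = 0 \<or> 2 + phi i + phi j = 0) \<or>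
    (\<exists>i\<in>{1..p-1}. \<exists>j\<in>{1..p-1}. i \<noteq> j \<and> phi i - phi j = 0) \<or>
    (\<exists>i\<in>{1..p-1}. phi i = 0 \<or> phi i + 1 = 0 \<or> 2 * phi i + 1 = 0)"

definition Omega2 :: "nat \<Rightarrow> (nat \<Rightarrow> complex) \<Rightarrow> bool" where
  "Omega2 p phi \<longleftrightarrow>
    (\<exists>i\<in>{1..p-1}. \<exists>j\<in>{1..p-1}.
        1 + phi i - phi j = 0 \<or> phi i + phi j = 0 \<or> 2 + phi i = 0 \<or> 1 - phi i = 0 \<or>
        1 + 2 * phi i - phi j = 0 \<or> 1 + 2 * phi i + phi j = 0 \<or>
        2 * phi i - phi j = 0 \<or> 2 + 2 * phi i + phi j = 0)"

definition in_Omega :: "nat \<Rightarrow> (nat \<Rightarrow> complex) \<Rightarrow> bool" where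
  "in_Omega p phi \<longleftrightarrow> Omega1 p phi \<or> Omega2 p phi"

end

theory Submission
  imports Defs
begin


interpretation V: vector_space tscale
  by unfold_locales (simp_all add: tscale_def fun_eq_iff algebra_simps)

lemma sum_fun_apply: "(sum f A) x = sum (\<lambda>a. f a x) A"
  by (induction A rule: infinite_finite_induct) auto

lemma Fbr_antisym: "Fbr phi i j k = - Fbr phi j i k"
  unfolding Fbr_def by auto

lemma Fbr_deg: "Fbr phi i j k \<noteq> 0 \<Longrightarrow> Fdeg k = Fdeg i + Fdeg j"
  unfolding Fbr_def Fdeg_def by (auto split: if_splits)




lemma dCE2_swap12:
  assumes A: "\<And>i j k. c i j k = - c j i k"
  shows "dCE2 p phi c b a e m = - dCE2 p phi c a b e m"
  unfolding dCE2_def sum_negf[symmetric]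
  apply (rule sum.cong[OF refl])
  using A[of b a] Fbr_antisym[of phi b a] by (simp add: algebra_simps)

lemma dCE2_swap23:
  assumes A: "\<And>i j k. c i j k = - c j i k"
  shows "dCE2 p phi c a e b m = - dCE2 p phi c a b e m"
  unfolding dCE2_def sum_negf[symmetric]
  apply (rule sum.cong[OF refl])
  using A[of e b] Fbr_antisym[of phi e b] by (simp add: algebra_simps)

lemma dCE2_deg:
  assumes H: "homogeneous2 0 c" and N: "dCE2 p phi c a b e m \<noteq> 0"
  shows "Fdeg m = Fdeg a + Fdeg b + Fdeg e"
proof (rule ccontr)
  assume D: "Fdeg m \<noteq> Fdeg a + Fdeg b + Fdeg e"
  have "dCE2 p phi c a b e m = 0"
    unfolding dCE2_def
  proof (rule sum.neutral, rule ballI)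
    fix l
    have z: "\<And>x y. Fbr phi x l m \<noteq> 0 \<Longrightarrow> c y e l \<noteq> 0 \<Longrightarrow> Fdeg m = Fdeg x + Fdeg y + Fdeg e"
      using H Fbr_deg unfolding homogeneous2_def by fastforce
    have z2: "\<And>x y. Fbr phi x b l \<noteq> 0 \<Longrightarrow> c l y m \<noteq> 0 \<Longrightarrow> Fdeg m = Fdeg x + Fdeg b + Fdeg y"
      using H Fbr_deg unfolding homogeneous2_def by fastforce
    have t1: "Fbr phi a l m * c b e l = 0" using z[of a b] D by fastforce
    have t2: "Fbr phi b l m * c a e l = 0" using z[of b a] D by fastforce
    have t3: "Fbr phi e l m * c a b l = 0"
      using H Fbr_deg[of phi e l m] D unfolding homogeneous2_def by fastforce
    have t4: "Fbr phi a b l * c l e m = 0" using z2[of a e] D by fastforce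
    have t5: "Fbr phi a e l * c l b m = 0"
      using H Fbr_deg[of phi a e l] D unfolding homogeneous2_def by fastforce
    have t6: "Fbr phi b e l * c l a m = 0"
      using H Fbr_deg[of phi b e l] D unfolding homogeneous2_def by fastforce
    show "Fbr phi a l m * c b e l - Fbr phi b l m * c a e l + Fbr phi e l m * c a b l -
          Fbr phi a b l * c l e m + Fbr phi a e l * c l b m - Fbr phi b e l * c l a m = 0"
      by (simp only: t1 t2 t3 t4 t5 t6) simp
  qed
  with N show False by simp
qed

definition pt :: "nat \<Rightarrow> nat" where "pt u = (if odd u then u + 1 else u - 1)"
definition sg :: "nat \<Rightarrow> complex" where "sg u = (if odd u then 1 else -1)"
definition lam :: "(nat \<Rightarrow> complex) \<Rightarrow> nat \<Rightarrow> complex" where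
  "lam phi u = (if odd u then phi ((u - 1) div 2) else - (1 + phi ((u - 2) div 2)))"

lemma ev4: "even (u::nat) \<Longrightarrow> 3 \<le> u \<Longrightarrow> 4 \<le> u" by presburger

lemma T1: "Fbr phi 2 l 1 = (if l = 1 then -1 else 0)"
  unfolding Fbr_def by auto
lemma T2: "u \<ge> 3 \<Longrightarrow> Fbr phi u l 1 = (if l = pt u then sg u else 0)"
  unfolding Fbr_def pt_def sg_def using ev4[of u] by auto
lemma T3: "u \<ge> 3 \<Longrightarrow> Fbr phi 2 u l = (if l = u then lam phi u else 0)"
  unfolding Fbr_def lam_def by auto
lemma T4: "u \<ge> 3 \<Longrightarrow> v \<ge> 3 \<Longrightarrow> Fbr phi u v l = (if v = pt u \<and> l = 1 then sg u else 0)"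
  unfolding Fbr_def pt_def sg_def by auto

lemma pt_range: "u \<in> {3..2*p} \<Longrightarrow> pt u \<in> {3..2*p}"
  unfolding pt_def using ev4[of u] by auto presburger

lemma sum_delta_mult: "finite A \<Longrightarrow> x \<in> A \<Longrightarrow> (\<Sum>l\<in>A. (if l = x then k else 0) * f l) = (k::complex) * f x"
proof -
  assume "finite A" "x \<in> A"
  have "(\<Sum>l\<in>A. (if l = x then k else 0) * f l) = (\<Sum>l\<in>A. if l = x then k * f l else 0)"
    by (rule sum.cong) auto
  also have "\<dots> = k * f x" using \<open>finite A\<close> \<open>x \<in> A\<close> by (simp add: sum.delta)
  finally show ?thesis .
qed

lemma dCE2_2uv:
  assumes u: "u \<in> {3..2*p}" and v: "v \<in> {3..2*p}"
  shows "dCE2 p phi c 2 u v 1 = - c u v 1 - sg u * c 2 v (pt u) + sg v * c 2 u (pt v)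
      - lam phi u * c u v 1 + lam phi v * c v u 1 - (if v = pt u then sg u * c 1 2 1 else 0)"
proof -
  have r: "1 \<in> {1..2*p}" "pt u \<in> {1..2*p}" "pt v \<in> {1..2*p}" "u \<in> {1..2*p}" "v \<in> {1..2*p}"
    using u v pt_range[OF u] pt_range[OF v] by auto
    let ?A = "{1..2*p}"
    have u3: "u \<ge> 3" and v3: "v \<ge> 3" using u v by auto
    have e1: "(\<Sum>l\<in>?A. Fbr phi 2 l 1 * c u v l) = - c u v 1"
      unfolding T1 using sum_delta_mult[of ?A 1 "-1" "c u v"] r by simp
    have e2: "(\<Sum>l\<in>?A. Fbr phi u l 1 * c 2 v l) = sg u * c 2 v (pt u)"
      unfolding T2[OF u3] using sum_delta_mult[of ?A "pt u" "sg u" "c 2 v"] r by simp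
    have e3: "(\<Sum>l\<in>?A. Fbr phi v l 1 * c 2 u l) = sg v * c 2 u (pt v)"
      unfolding T2[OF v3] using sum_delta_mult[of ?A "pt v" "sg v" "c 2 u"] r by simp
    have e4: "(\<Sum>l\<in>?A. Fbr phi 2 u l * c l v 1) = lam phi u * c u v 1"
      unfolding T3[OF u3] using sum_delta_mult[of ?A u "lam phi u" "\<lambda>l. c l v 1"] r by simp
    have e5: "(\<Sum>l\<in>?A. Fbr phi 2 v l * c l u 1) = lam phi v * c v u 1"
      unfolding T3[OF v3] using sum_delta_mult[of ?A v "lam phi v" "\<lambda>l. c l u 1"] r by simp
    have e6: "(\<Sum>l\<in>?A. Fbr phi u v l * c l 2 1) = (if v = pt u then sg u * c 1 2 1 else 0)"
      unfolding T4[OF u3 v3] using sum_delta_mult[of ?A 1 "sg u" "\<lambda>l. c l 2 1"] r by simp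
    show ?thesis unfolding dCE2_def
      by (simp only: sum.distrib sum_subtractf e1 e2 e3 e4 e5 e6)
qed




lemma dCE2_zero:
  assumes A: "\<And>i j k. c i j k = - c j i k" and H: "homogeneous2 0 c"
    and E: "\<And>u v. u \<in> {3..2*p} \<Longrightarrow> v \<in> {3..2*p} \<Longrightarrow> u \<noteq> v \<Longrightarrow> dCE2 p phi c 2 u v 1 = 0"
    and r: "a \<in> {1..2*p}" "b \<in> {1..2*p}" "e \<in> {1..2*p}" "m \<in> {1..2*p}"
  shows "dCE2 p phi c a b e m = 0"
proof (rule ccontr)
  assume N: "dCE2 p phi c a b e m \<noteq> 0"
  have D: "Fdeg m = Fdeg a + Fdeg b + Fdeg e" using dCE2_deg[OF H N] .
  have s12: "\<And>a b e m. dCE2 p phi c b a e m = - dCE2 p phi c a b e m" using dCE2_swap12[OF A] .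
  have s23: "\<And>a b e m. dCE2 p phi c a e b m = - dCE2 p phi c a b e m" using dCE2_swap23[OF A] .
  have ab: "a \<noteq> b" using N s12[of a a e m] by auto
  have be: "b \<noteq> e" using N s23[of a b b m] by auto
  have ae: "a \<noteq> e" using N s12[of a b a m] s23[of b a a m] by auto
  have cases: "(a = 2 \<and> b \<in> {3..2*p} \<and> e \<in> {3..2*p} \<and> m = 1) \<or>
               (b = 2 \<and> a \<in> {3..2*p} \<and> e \<in> {3..2*p} \<and> m = 1) \<or>
               (e = 2 \<and> a \<in> {3..2*p} \<and> b \<in> {3..2*p} \<and> m = 1)"
    using D ab be ae r unfolding Fdeg_def by (auto split: if_splits)
  then show False
  proof (elim disjE conjE)
    assume "a = 2" "b \<in> {3..2*p}" "e \<in> {3..2*p}" "m = 1"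
    then show False using N E[of b e] be by simp
  next
    assume "b = 2" "a \<in> {3..2*p}" "e \<in> {3..2*p}" "m = 1"
    then show False using N E[of a e] ae s12[of 2 a e 1] by simp
  next
    assume "e = 2" "a \<in> {3..2*p}" "b \<in> {3..2*p}" "m = 1"
    then show False using N E[of a b] ab s12[of 2 a b 1] s23[of a 2 b 1] by simp
  qed
qed




lemma lam_odd: "lam phi (Suc (2*i)) = phi i" unfolding lam_def by simp
lemma lam_even: "lam phi (Suc (Suc (2*i))) = - (1 + phi i)" unfolding lam_def by simp
lemma pt_odd: "pt (Suc (2*i)) = Suc (Suc (2*i))" unfolding pt_def by simp
lemma pt_even: "pt (Suc (Suc (2*i))) = Suc (2*i)" unfolding pt_def by simp
lemma sg_odd: "sg (Suc (2*i)) = 1" unfolding sg_def by simp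
lemma sg_even: "sg (Suc (Suc (2*i))) = -1" unfolding sg_def by simp

lemma S_cases:
  fixes u p :: nat
  assumes "u \<in> {3..2*p}"
  obtains i where "i \<in> {1..p-1}" "u = 2*i+1" | i where "i \<in> {1..p-1}" "u = 2*i+2"
proof (cases "odd u")
  case True
  then obtain i where i: "u = 2*i+1" by (metis oddE)
  then show ?thesis using that(1)[of i] assms by auto
next
  case False
  then obtain j where "u = 2*j" by blast
  then show ?thesis using that(2)[of "j - 1"] assms by auto
qed

lemma pt_pt: "u \<in> {3..2*p} \<Longrightarrow> pt (pt u) = u"
  by (erule S_cases) (auto simp: pt_odd pt_even)
lemma sg_pt: "u \<in> {3..2*p} \<Longrightarrow> sg (pt u) = - sg u"
  by (erule S_cases) (auto simp: pt_odd pt_even sg_odd sg_even)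
lemma lam_pt: "u \<in> {3..2*p} \<Longrightarrow> lam phi u + lam phi (pt u) = -1"
  by (erule S_cases) (auto simp: pt_odd pt_even lam_odd lam_even)
lemma sg_ne: "sg u \<noteq> 0" unfolding sg_def by simp

lemma denom:
  assumes O: "\<not> Omega1 p phi" and u: "u \<in> {3..2*p}" and v: "v \<in> {3..2*p}"
    and uv: "u \<noteq> v" "v \<noteq> pt u"
  shows "1 + lam phi u + lam phi v \<noteq> 0"
proof -
  have o1: "\<And>i j. i \<in> {1..p-1} \<Longrightarrow> j \<in> {1..p-1} \<Longrightarrow> 1 + phi i + phi j \<noteq> 0"
    using O unfolding Omega1_def by blast
  have o2: "\<And>i j. i \<in> {1..p-1} \<Longrightarrow> j \<in> {1..p-1} \<Longrightarrow> i \<noteq> j \<Longrightarrow> phi i - phi j \<noteq> 0"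
    using O unfolding Omega1_def by blast
  show ?thesis
  proof (rule S_cases[OF u]; rule S_cases[OF v])
    fix i j assume "i \<in> {1..p-1}" "u = 2*i+1" "j \<in> {1..p-1}" "v = 2*j+1"
    then show ?thesis using o1[of i j] by (simp add: lam_odd add.assoc)
  next
    fix i j assume "i \<in> {1..p-1}" "u = 2*i+1" "j \<in> {1..p-1}" "v = 2*j+2"
    then show ?thesis using o2[of i j] uv by (auto simp: lam_odd lam_even pt_odd)
  next
    fix i j assume "i \<in> {1..p-1}" "u = 2*i+2" "j \<in> {1..p-1}" "v = 2*j+1"
    then show ?thesis using o2[of j i] uv by (auto simp: lam_odd lam_even pt_even)
  next
    fix i j assume "i \<in> {1..p-1}" "u = 2*i+2" "j \<in> {1..p-1}" "v = 2*j+2"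
    then have h: "1 + lam phi u + lam phi v = - (1 + phi i + phi j)" by (simp add: lam_even)
    have "1 + phi i + phi j \<noteq> 0" using o1[of i j] \<open>i \<in> _\<close> \<open>j \<in> _\<close> by simp
    then show ?thesis unfolding h by (metis neg_equal_0_iff_equal)
  qed
qed

lemma Eq_form:
  assumes A: "\<And>i j k. c i j k = - c j i k" and u: "u \<in> {3..2*p}" and v: "v \<in> {3..2*p}"
  shows "dCE2 p phi c 2 u v 1 = - (1 + lam phi u + lam phi v) * c u v 1
     - sg u * c 2 v (pt u) + sg v * c 2 u (pt v) + (if v = pt u then sg u * c 2 1 1 else 0)"
  unfolding dCE2_2uv[OF u v] using A[of v u 1] A[of 1 2 1] by (simp add: algebra_simps)




lemma dCE2_add: "dCE2 p phi (c + d) a b e m = dCE2 p phi c a b e m + dCE2 p phi d a b e m"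
  unfolding dCE2_def sum.distrib[symmetric] plus_fun_apply by (rule sum.cong) (simp_all add: algebra_simps)

lemma dCE2_scale: "dCE2 p phi (tscale x c) a b e m = x * dCE2 p phi c a b e m"
  unfolding dCE2_def sum_distrib_left tscale_def by (rule sum.cong) (simp_all add: algebra_simps)

lemma dCE2_0: "dCE2 p phi 0 a b e m = 0"
  unfolding dCE2_def by simp

lemma Z2_subspace: "V.subspace (Z2 p phi 0)"
proof (rule V.subspaceI)
  show "0 \<in> Z2 p phi 0"
    unfolding Z2_def cocycle2_def cochain2_def homogeneous2_def by (simp add: dCE2_0)
next
  fix x y assume x: "x \<in> Z2 p phi 0" and y: "y \<in> Z2 p phi 0"
  have cx: "cochain2 p x" "homogeneous2 0 x" and cy: "cochain2 p y" "homogeneous2 0 y"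
    using x y unfolding Z2_def cocycle2_def by auto
  have "cochain2 p (x + y)" unfolding cochain2_def
  proof (rule conjI; intro allI impI)
    fix i j k assume "(x + y) i j k \<noteq> 0"
    then have "x i j k \<noteq> 0 \<or> y i j k \<noteq> 0" by auto
    then show "i \<in> {1..2*p} \<and> j \<in> {1..2*p} \<and> k \<in> {1..2*p}"
      using cx(1) cy(1) unfolding cochain2_def by blast
  next
    fix i j k show "(x + y) i j k = - (x + y) j i k"
    proof -
      have "x i j k = - x j i k" "y i j k = - y j i k" using cx(1) cy(1) unfolding cochain2_def by blast+
      then show ?thesis unfolding plus_fun_apply by simp
    qed
  qed
  moreover have "homogeneous2 0 (x + y)" unfolding homogeneous2_def
  proof (intro allI impI)
    fix i j k assume "(x + y) i j k \<noteq> 0"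
    then have "x i j k \<noteq> 0 \<or> y i j k \<noteq> 0" by auto
    then show "Fdeg k = Fdeg i + Fdeg j + 0"
      using cx(2) cy(2) unfolding homogeneous2_def by blast
  qed
  moreover have "\<forall>a\<in>{1..2*p}. \<forall>b\<in>{1..2*p}. \<forall>e\<in>{1..2*p}. \<forall>m\<in>{1..2*p}. dCE2 p phi (x+y) a b e m = 0"
    using x y unfolding Z2_def cocycle2_def by (simp add: dCE2_add)
  ultimately show "x + y \<in> Z2 p phi 0" unfolding Z2_def cocycle2_def by simp
next
  fix a x assume x: "x \<in> Z2 p phi 0"
  have cx: "cochain2 p x" "homogeneous2 0 x"
    using x unfolding Z2_def cocycle2_def by auto
  have "cochain2 p (tscale a x)" unfolding cochain2_def
  proof (rule conjI; intro allI impI)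
    fix i j k assume "tscale a x i j k \<noteq> 0"
    then have "x i j k \<noteq> 0" by (auto simp: tscale_def)
    then show "i \<in> {1..2*p} \<and> j \<in> {1..2*p} \<and> k \<in> {1..2*p}"
      using cx(1) unfolding cochain2_def by blast
  next
    fix i j k show "tscale a x i j k = - tscale a x j i k"
    proof -
      have "x i j k = - x j i k" using cx(1) unfolding cochain2_def by blast
      then show ?thesis unfolding tscale_def by simp
    qed
  qed
  moreover have "homogeneous2 0 (tscale a x)" unfolding homogeneous2_def
  proof (intro allI impI)
    fix i j k assume "tscale a x i j k \<noteq> 0"
    then have "x i j k \<noteq> 0" by (auto simp: tscale_def)
    then show "Fdeg k = Fdeg i + Fdeg j + 0"
      using cx(2) unfolding homogeneous2_def by blast
  qed
  moreover have "\<forall>a'\<in>{1..2*p}. \<forall>b\<in>{1..2*p}. \<forall>e\<in>{1..2*p}. \<forall>m\<in>{1..2*p}. dCE2 p phi (tscale a x) a' b e m = 0"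
    using x unfolding Z2_def cocycle2_def by (simp add: dCE2_scale)
  ultimately show "tscale a x \<in> Z2 p phi 0" unfolding Z2_def cocycle2_def by simp
qed




definition Ffree :: "nat \<Rightarrow> (nat \<times> nat \<times> nat) set" where
  "Ffree p = {(2,a,b) | a b. a \<in> {3..2*p} \<and> b \<in> {3..2*p} \<and> \<not> (a = b \<and> even a)}
     \<union> {(2,1,1)} \<union> {(u,u+1,1) | u. u \<in> {3..2*p} \<and> odd u}"

lemma hh1: "(-1 - x = (y::complex)) \<Longrightarrow> (1 + x + y = 0)"
  by (drule sym) simp

lemma rng3: "(x::nat) \<in> {1..2*p} \<Longrightarrow> x \<noteq> 1 \<Longrightarrow> x \<noteq> 2 \<Longrightarrow> x \<in> {3..2*p}" by auto

lemma kernel: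
  assumes z: "z \<in> Z2 p phi 0" and O: "\<not> Omega1 p phi"
    and zF: "\<And>i j k. (i,j,k) \<in> Ffree p \<Longrightarrow> z i j k = 0"
  shows "z = 0"
proof -
  let ?S = "{3..2*p}"
  have A: "\<And>i j k. z i j k = - z j i k" using z unfolding Z2_def cocycle2_def cochain2_def by blast
  have R: "\<And>i j k. z i j k \<noteq> 0 \<Longrightarrow> i \<in> {1..2*p} \<and> j \<in> {1..2*p} \<and> k \<in> {1..2*p}"
    using z unfolding Z2_def cocycle2_def cochain2_def by blast
  have H: "\<And>i j k. z i j k \<noteq> 0 \<Longrightarrow> Fdeg k = Fdeg i + Fdeg j"
    using z unfolding Z2_def homogeneous2_def by auto
  have E: "\<And>u v. u \<in> ?S \<Longrightarrow> v \<in> ?S \<Longrightarrow> dCE2 p phi z 2 u v 1 = 0"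
  proof -
    fix u v assume "u \<in> ?S" "v \<in> ?S"
    moreover have "2 \<in> {1..2*p}" "1 \<in> {1..2*p}" using \<open>u \<in> ?S\<close> by auto
    ultimately show "dCE2 p phi z 2 u v 1 = 0"
      using z unfolding Z2_def cocycle2_def by auto
  qed
  have s1: "\<And>a b. a \<in> ?S \<Longrightarrow> b \<in> ?S \<Longrightarrow> \<not> (a = b \<and> even a) \<Longrightarrow> z 2 a b = 0"
    using zF unfolding Ffree_def by blast
  have s2: "z 2 1 1 = 0" using zF unfolding Ffree_def by blast
  have s3: "\<And>u. u \<in> ?S \<Longrightarrow> odd u \<Longrightarrow> z u (u+1) 1 = 0" using zF unfolding Ffree_def by blast
  have s4: "\<And>a b. a \<in> ?S \<Longrightarrow> b \<in> ?S \<Longrightarrow> z 2 a b = 0"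
  proof -
    fix a b assume a: "a \<in> ?S" and b: "b \<in> ?S"
    show "z 2 a b = 0"
    proof (cases "a = b \<and> even a")
      case False then show ?thesis using s1 a b by blast
    next
      case True
      then have ba: "b = a" and ea: "even a" by auto
      let ?u = "pt a"
      have u: "?u \<in> ?S" using pt_range[OF a] .
      have ou: "odd ?u" using ea a unfolding pt_def by auto
      have ptu: "pt ?u = a" using pt_pt[OF a] .
      have l: "1 + lam phi ?u + lam phi a = 0" using lam_pt[OF u] ptu by (simp add: algebra_simps)
      have "dCE2 p phi z 2 ?u a 1 = 0" using E[OF u a] .
      then have "- sg ?u * z 2 a a + sg a * z 2 ?u ?u + sg ?u * z 2 1 1 = 0"
        unfolding Eq_form[OF A u a] using ptu l pt_pt[OF a] by simp
      moreover have "z 2 ?u ?u = 0" using s1[OF u u] ou by blast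
      ultimately have "sg ?u * z 2 a a = 0" using s2 by simp
      then show ?thesis using ba sg_ne by simp
    qed
  qed
  have s5: "\<And>u v. u \<in> ?S \<Longrightarrow> v \<in> ?S \<Longrightarrow> z u v 1 = 0"
  proof -
    fix u v assume u: "u \<in> ?S" and v: "v \<in> ?S"
    show "z u v 1 = 0"
    proof (cases "u = v")
      case True then show ?thesis using A[of u u 1] by simp
    next
      case uv: False
      show ?thesis
      proof (cases "v = pt u")
        case True
        show ?thesis
        proof (cases "odd u")
          case True then show ?thesis using s3[OF u] \<open>v = pt u\<close> unfolding pt_def by simp
        next
          case False
          then have "v = u - 1" "odd v" "u = v + 1" using \<open>v = pt u\<close> u unfolding pt_def by auto
          then show ?thesis using s3[OF v] A[of u v 1] by simp
        qed
      next
        case False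
        have "dCE2 p phi z 2 u v 1 = 0" using E[OF u v] .
        then have "(1 + lam phi u + lam phi v) * z u v 1 = 0"
          unfolding Eq_form[OF A u v] using False s4[OF v pt_range[OF u]] s4[OF u pt_range[OF v]]
          by simp (use hh1 in blast)
        then show ?thesis using denom[OF O u v uv False] by simp
      qed
    qed
  qed
  show "z = 0"
  proof (rule ext, rule ext, rule ext, rule ccontr)
    fix i j k assume N: "z i j k \<noteq> (0 :: nat \<Rightarrow> nat \<Rightarrow> nat \<Rightarrow> complex) i j k"
    then have N': "z i j k \<noteq> 0" by simp
    have ri: "i \<in> {1..2*p}" and rj: "j \<in> {1..2*p}" and rk: "k \<in> {1..2*p}" using R[OF N'] by auto
    have D: "Fdeg k = Fdeg i + Fdeg j" using H[OF N'] .
    have z22: "z 2 2 k' = 0" for k'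
    proof -
      have "z 2 2 k' = - z 2 2 k'" using A .
      then show ?thesis by auto
    qed
    consider "i = 1" | "i = 2" | "i \<in> ?S" using ri by force
    then show False
    proof cases
      case 1
      then have "j = 2" "k = 1" using D rj rk unfolding Fdeg_def by (auto split: if_splits)
      then show False using N' 1 A[of 1 2 1] s2 by simp
    next
      case 2
      consider "j = 1" | "j = 2" | "j \<in> ?S" using rj by force
      then show False
      proof cases
        case 1 then have "k = 1" using D \<open>i = 2\<close> unfolding Fdeg_def by (auto split: if_splits)
        then show False using N' 1 \<open>i = 2\<close> s2 by simp
      next
        case 2 then show False using N' \<open>i = 2\<close> z22 by simp
      next
        case 3 then have "k \<in> ?S" using D \<open>i = 2\<close> rk unfolding Fdeg_def by (auto split: if_splits)
        then show False using N' 3 \<open>i = 2\<close> s4 by simp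
      qed
    next
      case 3
      consider "j = 1" | "j = 2" | "j \<in> ?S" using rj by force
      then show False
      proof cases
        case 1 then show False using D 3 unfolding Fdeg_def by (auto split: if_splits)
      next
        case 2 then have "k \<in> ?S" using D 3 rk unfolding Fdeg_def by (auto split: if_splits)
        then show False using N' 2 3 s4 A[of i 2 k] by simp
      next
        case j3: 3 then have "k = 1" using D 3 unfolding Fdeg_def by (auto split: if_splits)
        then show False using N' 3 j3 s5 by simp
      qed
    qed
  qed
qed




definition Dg :: "(nat \<Rightarrow> nat \<Rightarrow> nat \<Rightarrow> complex) \<Rightarrow> nat \<Rightarrow> nat \<Rightarrow> complex" where
  "Dg g a b = (if a = b \<and> even a then g 2 1 1 - g 2 (a-1) (a-1) else g 2 a b)"

definition Sblk :: "(nat \<Rightarrow> complex) \<Rightarrow> (nat \<Rightarrow> nat \<Rightarrow> nat \<Rightarrow> complex) \<Rightarrow> nat \<Rightarrow> nat \<Rightarrow> complex" where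
  "Sblk phi g i j = (if j = pt i then (if odd i then g i j 1 else - g j i 1)
      else (sg j * Dg g i (pt j) - sg i * Dg g j (pt i)) / (1 + lam phi i + lam phi j))"

definition extc :: "nat \<Rightarrow> (nat \<Rightarrow> complex) \<Rightarrow> (nat \<Rightarrow> nat \<Rightarrow> nat \<Rightarrow> complex) \<Rightarrow> nat \<Rightarrow> nat \<Rightarrow> nat \<Rightarrow> complex" where
  "extc p phi g i j k =
    (if i = 2 \<and> j \<in> {3..2*p} \<and> k \<in> {3..2*p} then Dg g j k
     else if j = 2 \<and> i \<in> {3..2*p} \<and> k \<in> {3..2*p} then - Dg g i k
     else if i = 2 \<and> j = 1 \<and> k = 1 then g 2 1 1
     else if i = 1 \<and> j = 2 \<and> k = 1 then - g 2 1 1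
     else if i \<in> {3..2*p} \<and> j \<in> {3..2*p} \<and> k = 1 \<and> i \<noteq> j then Sblk phi g i j
     else 0)"

lemma Sblk_antisym:
  assumes i: "i \<in> {3..2*p}" and j: "j \<in> {3..2*p}"
  shows "Sblk phi g i j = - Sblk phi g j i"
proof (cases "j = pt i")
  case True
  then have ij: "i = pt j" using pt_pt[OF i] by simp
  have "odd i \<longleftrightarrow> \<not> odd j" using True i unfolding pt_def by auto
  then show ?thesis unfolding Sblk_def if_P[OF True] if_P[OF ij] by auto
next
  case False
  then have ij: "i \<noteq> pt j" using pt_pt[OF j] by auto
  define X where "X = sg j * Dg g i (pt j)"
  define Y where "Y = sg i * Dg g j (pt i)"
  define d where "d = 1 + lam phi i + lam phi j"
  have d2: "1 + lam phi j + lam phi i = d" unfolding d_def by simp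
  have a: "Sblk phi g i j = (X - Y) / d" unfolding Sblk_def X_def Y_def d_def if_not_P[OF False] ..
  have b: "Sblk phi g j i = (Y - X) / d" unfolding Sblk_def X_def Y_def d2[symmetric] if_not_P[OF ij] ..
  show ?thesis unfolding a b minus_divide_left minus_diff_eq ..
qed

lemma extc_antisym: "extc p phi g i j k = - extc p phi g j i k"
proof -
  let ?S = "{3..2*p}"
  consider "i = 2 \<and> j \<in> ?S \<and> k \<in> ?S" | "j = 2 \<and> i \<in> ?S \<and> k \<in> ?S" | "i = 2 \<and> j = 1 \<and> k = 1"
    | "i = 1 \<and> j = 2 \<and> k = 1" | "i \<in> ?S \<and> j \<in> ?S \<and> k = 1 \<and> i \<noteq> j"
    | "\<not> (i = 2 \<and> j \<in> ?S \<and> k \<in> ?S)" "\<not> (j = 2 \<and> i \<in> ?S \<and> k \<in> ?S)" "\<not> (i = 2 \<and> j = 1 \<and> k = 1)"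
      "\<not> (i = 1 \<and> j = 2 \<and> k = 1)" "\<not> (i \<in> ?S \<and> j \<in> ?S \<and> k = 1 \<and> i \<noteq> j)" by blast
  then show ?thesis
  proof cases
    case 1 then show ?thesis unfolding extc_def by auto
  next
    case 2 then show ?thesis unfolding extc_def by auto
  next
    case 3 then show ?thesis unfolding extc_def by auto
  next
    case 4 then show ?thesis unfolding extc_def by auto
  next
    case 5 then show ?thesis unfolding extc_def using Sblk_antisym[of i p j phi g] by auto
  next
    case 6 then show ?thesis unfolding extc_def by auto
  qed
qed

lemma extc_range: "p \<ge> 1 \<Longrightarrow> extc p phi g i j k \<noteq> 0 \<Longrightarrow> i \<in> {1..2*p} \<and> j \<in> {1..2*p} \<and> k \<in> {1..2*p}"
  unfolding extc_def by (auto split: if_splits)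

lemma extc_cases: "extc p phi g i j k \<noteq> 0 \<Longrightarrow>
   (i = 2 \<and> j \<in> {3..2*p} \<and> k \<in> {3..2*p}) \<or> (j = 2 \<and> i \<in> {3..2*p} \<and> k \<in> {3..2*p}) \<or>
   (i = 2 \<and> j = 1 \<and> k = 1) \<or> (i = 1 \<and> j = 2 \<and> k = 1) \<or> (i \<in> {3..2*p} \<and> j \<in> {3..2*p} \<and> k = 1)"
  unfolding extc_def by (auto split: if_split_asm)

lemma Fdeg1: "Fdeg 1 = 2" and Fdeg1': "Fdeg (Suc 0) = 2" and Fdeg2: "Fdeg 2 = 0" and FdegS: "x \<in> {3..2*p} \<Longrightarrow> Fdeg x = 1"
  unfolding Fdeg_def by auto

lemma extc_hom: "homogeneous2 0 (extc p phi g)"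
  unfolding homogeneous2_def
proof (intro allI impI)
  fix i j k assume "extc p phi g i j k \<noteq> 0"
  from extc_cases[OF this] show "Fdeg k = Fdeg i + Fdeg j + 0"
    by (elim disjE) (auto simp: Fdeg1 Fdeg1' Fdeg2 FdegS[of _ p])
qed

lemma extc_F: "(i,j,k) \<in> Ffree p \<Longrightarrow> extc p phi g i j k = g i j k"
proof -
  assume "(i,j,k) \<in> Ffree p"
  then consider a b where "i = 2" "j = a" "k = b" "a \<in> {3..2*p}" "b \<in> {3..2*p}" "\<not> (a = b \<and> even a)"
    | "i = 2" "j = 1" "k = 1" | u where "i = u" "j = u + 1" "k = 1" "u \<in> {3..2*p}" "odd u"
    unfolding Ffree_def by blast
  then show ?thesis
  proof cases
    case 1 then show ?thesis unfolding extc_def Dg_def by auto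
  next
    case 2 then show ?thesis unfolding extc_def by auto
  next
    case 3
    then have "u + 1 \<in> {3..2*p}" by auto presburger
    moreover have "u + 1 = pt u" using 3 unfolding pt_def by simp
    ultimately show ?thesis using 3 unfolding extc_def Sblk_def by auto
  qed
qed




lemma Dg_pair: "u \<in> {3..2*p} \<Longrightarrow> Dg g (pt u) (pt u) + Dg g u u = g 2 1 1"
  by (erule S_cases) (auto simp: pt_odd pt_even Dg_def)

lemma extc_eq:
  assumes O: "\<not> Omega1 p phi" and u: "u \<in> {3..2*p}" and v: "v \<in> {3..2*p}" and uv: "u \<noteq> v"
  shows "dCE2 p phi (extc p phi g) 2 u v 1 = 0"
proof -
  let ?c = "extc p phi g"
  have A: "\<And>i j k. ?c i j k = - ?c j i k" by (rule extc_antisym)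
  have c1: "?c u v 1 = Sblk phi g u v" using u v uv unfolding extc_def by auto
  have c2: "?c 2 v (pt u) = Dg g v (pt u)" using v pt_range[OF u] unfolding extc_def by auto
  have c3: "?c 2 u (pt v) = Dg g u (pt v)" using u pt_range[OF v] unfolding extc_def by auto
  have c4: "?c 2 1 1 = g 2 1 1" unfolding extc_def by auto
  have e: "dCE2 p phi ?c 2 u v 1 = - (1 + lam phi u + lam phi v) * Sblk phi g u v
     - sg u * Dg g v (pt u) + sg v * Dg g u (pt v) + (if v = pt u then sg u * g 2 1 1 else 0)"
    unfolding Eq_form[OF A u v] c1 c2 c3 c4 ..
  show ?thesis
  proof (cases "v = pt u")
    case True
    have l: "1 + lam phi u + lam phi v = 0" using lam_pt[OF u] True by (simp add: algebra_simps)
    have pv: "pt v = u" using pt_pt[OF u] True by simp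
    have s: "sg v = - sg u" using sg_pt[OF u] True by simp
    have d: "Dg g v v + Dg g u u = g 2 1 1" using Dg_pair[OF u, of g] True by simp
    have "dCE2 p phi ?c 2 u v 1 = - sg u * (Dg g v v + Dg g u u - g 2 1 1)"
      unfolding e l pv s using True by (simp add: algebra_simps)
    then show ?thesis using d by simp
  next
    case False
    have dn: "1 + lam phi u + lam phi v \<noteq> 0" using denom[OF O u v uv False] .
    have sb: "Sblk phi g u v = (sg v * Dg g u (pt v) - sg u * Dg g v (pt u)) / (1 + lam phi u + lam phi v)"
      unfolding Sblk_def if_not_P[OF False] ..
    show ?thesis unfolding e sb using False dn by (simp add: field_simps)
  qed
qed

lemma extc_Z2:
  assumes O: "\<not> Omega1 p phi" and p: "p \<ge> 1"
  shows "extc p phi g \<in> Z2 p phi 0"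
proof -
  let ?c = "extc p phi g"
  have A: "\<And>i j k. ?c i j k = - ?c j i k" by (rule extc_antisym)
  have ch: "cochain2 p ?c" unfolding cochain2_def using extc_range[OF p] A by blast
  have "\<forall>a\<in>{1..2*p}. \<forall>b\<in>{1..2*p}. \<forall>e\<in>{1..2*p}. \<forall>m\<in>{1..2*p}. dCE2 p phi ?c a b e m = 0"
    using dCE2_zero[OF A extc_hom extc_eq[OF O]] by blast
  then show ?thesis unfolding Z2_def cocycle2_def using ch extc_hom by simp
qed




lemma Ev_eq: fixes p :: nat shows "{a \<in> {3..2*p}. even a} = (\<lambda>i. 2*i+2) ` {1..p-1}"
proof (rule set_eqI, rule iffI)
  fix a assume "a \<in> {a \<in> {3..2*p}. even a}"
  then have "a \<in> {3..2*p}" "even a" by auto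
  then obtain j where "a = 2*j" by blast
  then show "a \<in> (\<lambda>i. 2*i+2) ` {1..p-1}" using \<open>a \<in> {3..2*p}\<close>
    by (intro image_eqI[of _ _ "j - 1"]) auto
qed auto

lemma Od_eq: fixes p :: nat shows "{a \<in> {3..2*p}. odd a} = (\<lambda>i. 2*i+1) ` {1..p-1}"
proof (rule set_eqI, rule iffI)
  fix a assume "a \<in> {a \<in> {3..2*p}. odd a}"
  then have "a \<in> {3..2*p}" "odd a" by auto
  then obtain j where "a = 2*j+1" by (metis oddE)
  then show "a \<in> (\<lambda>i. 2*i+1) ` {1..p-1}" using \<open>a \<in> {3..2*p}\<close>
    by (intro image_eqI[of _ _ j]) auto
qed auto

lemma card_Ev: "card {a \<in> {3..2*p}. even a} = p - 1"
  unfolding Ev_eq by (subst card_image) (auto simp: inj_on_def)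

lemma card_Od: "card {a \<in> {3..2*p}. odd a} = p - 1"
  unfolding Od_eq by (subst card_image) (auto simp: inj_on_def)

lemma card_Ffree:
  assumes "p \<ge> 1"
  shows "card (Ffree p) = (2*p-2)*(2*p-2) + 1"
proof -
  let ?S = "{3..2*p}"
  let ?D = "(\<lambda>a. (a,a)) ` {a \<in> ?S. even a}"
  let ?FA = "(\<lambda>(a,b). (2::nat,a,b)) ` (?S \<times> ?S - ?D)"
  let ?FC = "(\<lambda>u. (u,u+1,1::nat)) ` {a \<in> ?S. odd a}"
  have eq: "Ffree p = ?FA \<union> {(2,1,1)} \<union> ?FC"
    unfolding Ffree_def by auto
  have cD: "card ?D = p - 1" using card_Ev[of p] by (subst card_image) (auto simp: inj_on_def)
  have cS: "card ?S = 2*p-2" by simp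
  have cA: "card ?FA = (2*p-2)*(2*p-2) - (p-1)"
  proof -
    have "card ?FA = card (?S \<times> ?S - ?D)" by (subst card_image) (auto simp: inj_on_def)
    also have "\<dots> = card (?S \<times> ?S) - card ?D" by (rule card_Diff_subset) auto
    also have "\<dots> = (2*p-2)*(2*p-2) - (p-1)" using cD cS by (simp add: card_cartesian_product)
    finally show ?thesis .
  qed
  have cC: "card ?FC = p - 1" using card_Od[of p] by (subst card_image) (auto simp: inj_on_def)
  have "card (Ffree p) = card (?FA \<union> {(2,1,1)}) + card ?FC"
    unfolding eq by (rule card_Un_disjoint) auto
  also have "card (?FA \<union> {(2,1,1)}) = card ?FA + 1"
    by (subst card_Un_disjoint) auto
  finally have "card (Ffree p) = (2*p-2)*(2*p-2) - (p-1) + 1 + (p-1)" using cA cC by simp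
  moreover have "p - 1 \<le> (2*p-2)*(2*p-2)" using le_square[of "2*p-2"] by linarith
  ultimately show ?thesis by simp
qed

lemma finite_Ffree: "finite (Ffree p)"
proof -
  have o: "\<And>u. odd u \<Longrightarrow> u \<le> 2*p \<Longrightarrow> Suc u \<le> 2*p+2" by presburger
  have "Ffree p \<subseteq> {0..2*p+2} \<times> {0..2*p+2} \<times> {0..2*p+2}" unfolding Ffree_def using o by auto
  then show ?thesis by (rule finite_subset) auto
qed




definition dlt :: "nat \<times> nat \<times> nat \<Rightarrow> nat \<Rightarrow> nat \<Rightarrow> nat \<Rightarrow> complex" where
  "dlt t = (\<lambda>i j k. if (i,j,k) = t then 1 else 0)"

theorem lemma5:
  fixes p :: nat and phi :: "nat \<Rightarrow> complex"
  assumes "p \<ge> 2" and "\<not> in_Omega p phi"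
  shows "int (cdim (Z2 p phi 0)) = 4 * int p ^ 2 - 8 * int p + 5"
proof -
  have O: "\<not> Omega1 p phi" using assms(2) unfolding in_Omega_def by simp
  have p1: "p \<ge> 1" using assms(1) by simp
  let ?F = "Ffree p"
  let ?Z = "Z2 p phi 0"
  define E where "E t = extc p phi (dlt t)" for t
  let ?B = "E ` ?F"
  have fF: "finite ?F" by (rule finite_Ffree)
  have EF: "\<And>t i j k. (i,j,k) \<in> ?F \<Longrightarrow> E t i j k = (if (i,j,k) = t then 1 else 0)"
    unfolding E_def using extc_F by (simp add: dlt_def)
  have inj: "inj_on E ?F"
  proof (rule inj_onI)
    fix t s assume t: "t \<in> ?F" and s: "s \<in> ?F" and eq: "E t = E s"
    obtain i j k where tt: "t = (i,j,k)" by (cases t) auto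
    have "E t i j k = 1" using EF[of i j k t] t tt by simp
    then have "E s i j k = 1" using eq by simp
    then show "t = s" using EF[of i j k s] t tt by (auto split: if_splits)
  qed
  have BZ: "?B \<subseteq> ?Z" unfolding E_def using extc_Z2[OF O p1] by auto
  have cB: "card ?B = card ?F" using card_image[OF inj] .
  have indep: "V.independent ?B"
  proof (rule V.independent_if_scalars_zero)
    show "finite ?B" using fF by simp
  next
    fix f x assume sum0: "(\<Sum>y\<in>?B. tscale (f y) y) = 0" and x: "x \<in> ?B"
    then obtain t0 where t0: "t0 \<in> ?F" "x = E t0" by auto
    obtain i j k where tt: "t0 = (i,j,k)" by (cases t0) auto
    have "0 = (\<Sum>y\<in>?B. tscale (f y) y) i j k" using sum0 by simp
    also have "\<dots> = (\<Sum>y\<in>?B. f y * y i j k)" by (simp add: sum_fun_apply tscale_def)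
    also have "\<dots> = (\<Sum>t\<in>?F. f (E t) * E t i j k)" by (rule sum.reindex[OF inj, unfolded comp_def])
    also have "\<dots> = (\<Sum>t\<in>?F. if t = t0 then f (E t) else 0)"
      by (rule sum.cong[OF refl]) (use EF[of i j k] t0 tt in auto)
    also have "\<dots> = f (E t0)" using fF t0 by simp
    finally show "f x = 0" using t0 by simp
  qed
  have span: "?Z \<subseteq> V.span ?B"
  proof
    fix z assume z: "z \<in> ?Z"
    define w where "w = z - (\<Sum>t\<in>?F. tscale (z (fst t) (fst (snd t)) (snd (snd t))) (E t))"
    have sub: "V.subspace ?Z" by (rule Z2_subspace)
    have wZ: "w \<in> ?Z" unfolding w_def
      by (intro V.subspace_diff[OF sub z] V.subspace_sum[OF sub] V.subspace_scale[OF sub]) (use BZ in auto)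
    have w0: "w i j k = 0" if ijk: "(i,j,k) \<in> ?F" for i j k
    proof -
      have "w i j k = z i j k - (\<Sum>t\<in>?F. z (fst t) (fst (snd t)) (snd (snd t)) * E t i j k)"
        unfolding w_def by (simp add: sum_fun_apply tscale_def)
      also have "(\<Sum>t\<in>?F. z (fst t) (fst (snd t)) (snd (snd t)) * E t i j k)
          = (\<Sum>t\<in>?F. if t = (i,j,k) then z i j k else 0)"
        by (rule sum.cong[OF refl]) (use EF[of i j k] ijk in auto)
      also have "\<dots> = z i j k" using fF ijk by simp
      finally show ?thesis by simp
    qed
    have "w = 0" by (rule kernel[OF wZ O]) (use w0 in auto)
    then have "z = (\<Sum>t\<in>?F. tscale (z (fst t) (fst (snd t)) (snd (snd t))) (E t))" unfolding w_def by simp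
    also have "\<dots> \<in> V.span ?B"
      by (intro V.span_sum V.span_scale V.span_base) auto
    finally show "z \<in> V.span ?B" .
  qed
  have "cdim ?Z = card ?F" using V.dim_unique[OF BZ span indep cB] .
  also have "\<dots> = (2*p-2)*(2*p-2) + 1" using card_Ffree[OF p1] .
  finally have d: "cdim ?Z = (2*p-2)*(2*p-2) + 1" .
  have "int ((2*p-2)*(2*p-2) + 1) = (2 * int p - 2) * (2 * int p - 2) + 1"
    using assms(1) by (simp add: of_nat_diff)
  also have "\<dots> = 4 * int p ^ 2 - 8 * int p + 5" by (simp add: algebra_simps power2_eq_square)
  finally show ?thesis using d by simp
qed


end
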